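(* For every $d\ge 0$, the face poset $C^d$ of the $d$-dimensional hypercube satisfies $$\mathcal{M}_{C^d}(z)=(3-2z)^d-z(2-z)^d+1.$$
   Context: The face poset of a convex polytope with vertex set $V$ is the set of vertex sets of its faces (including the whole polytope) together with $\emptyset$, ordered by inclusion, ranked by dimension ($|\emptyset|=-1$). The Möbius function $\mu$ is $\mu[p,p]=1$, $\mu[p,q]=-\sum_{p\le s<q}\mu[p,s]$ for $p<q$, $0$ if $p\not\le q$; the Möbius polynomial is $\mathcal{M}_P(z)=\sum_{p\le q\in P}\mu[p,q]z^{|q|-|p|}$. *)

theory Defs
  imports "HOL-Computational_Algebra.Polynomial"
begin

text \<open>Moebius function of a poset P of sets ordered by inclusion:
  mu[p,p] = 1, mu[p,q] = - sum over p <= s < q (s in P) of mu[p,s] for p < q, and 0 otherwise.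
  (All sets occurring here are finite; the finiteness guard only serves termination.)\<close>
function mobius :: "'a set set \<Rightarrow> 'a set \<Rightarrow> 'a set \<Rightarrow> int" where
  "mobius P p q =
     (if p = q then 1
      else if p \<subset> q \<and> finite q then
        - (\<Sum>s\<in>{s\<in>P. p \<subseteq> s \<and> s \<subset> q}. mobius P p s)
      else 0)"
  by auto
termination
  by (relation "measure (\<lambda>(P,p,q). card q)") (auto intro: psubset_card_mono)

definition mobius_poly :: "'a set set \<Rightarrow> ('a set \<Rightarrow> int) \<Rightarrow> int poly" where
  "mobius_poly P rk =
     (\<Sum>(p,q)\<in>{(p,q). p \<in> P \<and> q \<in> P \<and> p \<subseteq> q}. monom (mobius P p q) (nat (rk q - rk p)))"

text \<open>The d-cube [0,1]^d: vertices are the 0/1-vectors of length d (as bool lists).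
  Its (nonempty) faces are given by fixing some coordinates (Some b) and leaving
  the others free (None); the face's vertex set is below.\<close>
definition cube_vertices :: "nat \<Rightarrow> bool list set" where
  "cube_vertices d = {v. length v = d}"

definition cube_face_vset :: "bool option list \<Rightarrow> bool list set" where
  "cube_face_vset s = {v. length v = length s \<and> (\<forall>i<length s. s ! i = None \<or> s ! i = Some (v ! i))}"

definition cube_face_poset :: "nat \<Rightarrow> bool list set set" where
  "cube_face_poset d = insert {} {cube_face_vset s | s. length s = d}"

definition cube_rank :: "bool list set \<Rightarrow> int" where
  "cube_rank F = (if F = {} then -1 else int (THE k. card F = 2 ^ k))"

end

theory Submission
  imports Defs
begin

declare mobius.simps[simp del]

definition refines :: "bool option list \<Rightarrow> bool option list \<Rightarrow> bool" where
  "refines s t = list_all2 (\<lambda>x y. y = None \<or> y = x) s t"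

definition nfree :: "bool option list \<Rightarrow> nat" where
  "nfree s = length (filter (\<lambda>x. x = None) s)"

lemma nfree_simps[simp]: "nfree [] = 0" "nfree (x # s) = (if x = None then Suc (nfree s) else nfree s)"
  by (auto simp: nfree_def)

lemma monom_neg: "monom ((-1::int)^n) n = [:0,-1:]^n"
proof -
  have "[:0,-1::int:] = smult (-1) [:0,1:]" by simp
  then have "[:0,-1::int:]^n = smult ((-1)^n) ([:0,1:]^n)" by (simp only: smult_power)
  then show ?thesis by (simp add: monom_altdef)
qed

lemma sum_list_all2:
  fixes R :: "'a::finite \<Rightarrow> 'b \<Rightarrow> bool" and h :: "'a \<Rightarrow> 'b \<Rightarrow> 'c::comm_semiring_1"
  shows "(\<Sum>s\<in>{s. list_all2 R s t}. prod_list (map2 h s t))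
       = prod_list (map (\<lambda>y. \<Sum>x\<in>{x. R x y}. h x y) t)"
proof (induction t)
  case Nil
  have "{s. list_all2 R s []} = {[]}" by auto
  then show ?case by simp
next
  case (Cons y t)
  have eq: "{s. list_all2 R s (y # t)} = (\<lambda>(x,s). x # s) ` ({x. R x y} \<times> {s. list_all2 R s t})"
    by (auto simp: list_all2_Cons2)
  have inj: "inj_on (\<lambda>(x,s). x # s) ({x. R x y} \<times> {s. list_all2 R s t})"
    by (auto simp: inj_on_def)
  have "(\<Sum>s\<in>{s. list_all2 R s (y # t)}. prod_list (map2 h s (y # t)))
      = (\<Sum>(x,s)\<in>{x. R x y} \<times> {s. list_all2 R s t}. h x y * prod_list (map2 h s t))"
    unfolding eq by (subst sum.reindex[OF inj]) (auto intro!: sum.cong)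
  also have "\<dots> = (\<Sum>x\<in>{x. R x y}. h x y) * (\<Sum>s\<in>{s. list_all2 R s t}. prod_list (map2 h s t))"
    by (simp add: sum_product sum.cartesian_product)
  finally show ?case using Cons by simp
qed

lemma prod_nfree: "list_all2 R u t \<Longrightarrow> prod_list (map2 (\<lambda>x y. if x = None then c else 1) u t) = c ^ nfree u"
  by (induction rule: list_all2_induct) auto

lemma prod_diff:
  "refines s t \<Longrightarrow> prod_list (map2 (\<lambda>x y. if y = None \<and> x \<noteq> None then c else 1) s t) = c ^ (nfree t - nfree s)
     \<and> nfree s \<le> nfree t"
  unfolding refines_def
proof (induction rule: list_all2_induct)
  case Nil
  then show ?case by simp
next
  case (Cons x y s t)
  then show ?case by (auto simp: Suc_diff_le)
qed

lemma refines_nfree: "refines s t \<Longrightarrow> nfree s \<le> nfree t"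
  using prod_diff[of s t 1] by blast

definition witness :: "bool option list \<Rightarrow> bool list" where
  "witness s = map (\<lambda>x. case x of Some b \<Rightarrow> b | None \<Rightarrow> False) s"

lemma witness_in: "witness s \<in> cube_face_vset s"
  by (auto simp: cube_face_vset_def witness_def split: option.splits)

lemma face_nonempty: "cube_face_vset s \<noteq> {}"
  using witness_in by auto

lemma face_finite: "finite (cube_face_vset s)"
proof -
  have "cube_face_vset s \<subseteq> {v. set v \<subseteq> UNIV \<and> length v = length s}"
    by (auto simp: cube_face_vset_def)
  moreover have "finite {v. set v \<subseteq> (UNIV::bool set) \<and> length v = length s}"
    by (rule finite_lists_length_eq) simp
  ultimately show ?thesis by (rule finite_subset)
qed

lemma face_subset_iff: "cube_face_vset s \<subseteq> cube_face_vset t \<longleftrightarrow> refines s t"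
proof
  assume "refines s t"
  then have l: "length s = length t" and h: "\<forall>i<length s. t!i = None \<or> t!i = s!i"
    by (auto simp: refines_def list_all2_conv_all_nth)
  show "cube_face_vset s \<subseteq> cube_face_vset t"
  proof
    fix v assume "v \<in> cube_face_vset s"
    then have lv: "length v = length s" and hv: "\<forall>i<length s. s ! i = None \<or> s ! i = Some (v ! i)"
      by (auto simp: cube_face_vset_def)
    have "\<forall>i<length t. t ! i = None \<or> t ! i = Some (v ! i)"
    proof (intro allI impI)
      fix i assume "i < length t"
      then show "t ! i = None \<or> t ! i = Some (v ! i)" using h hv l by metis
    qed
    then show "v \<in> cube_face_vset t" using l lv by (simp add: cube_face_vset_def)
  qed
next
  assume sub: "cube_face_vset s \<subseteq> cube_face_vset t"
  let ?w = "witness s"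
  have wt: "?w \<in> cube_face_vset t" using sub witness_in by blast
  have l: "length s = length t" using wt by (simp add: cube_face_vset_def witness_def)
  have "t!i = None \<or> t!i = s!i" if i: "i < length s" for i
  proof (cases "t!i")
    case None then show ?thesis by simp
  next
    case (Some b)
    show ?thesis
    proof (cases "s!i")
      case None
      let ?w' = "?w[i := \<not> b]"
      have "?w' \<in> cube_face_vset s" using witness_in[of s] None i
        by (auto simp: cube_face_vset_def nth_list_update)
      then have "?w' \<in> cube_face_vset t" using sub by blast
      then have "\<forall>j<length t. t!j = None \<or> t!j = Some (?w' ! j)" by (simp add: cube_face_vset_def)
      then have "t!i = Some (?w' ! i)" using i l Some by auto
      moreover have "?w' ! i = (\<not> b)" using i by (simp add: witness_def)
      ultimately have "t!i = Some (\<not> b)" by simp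
      then show ?thesis using Some by simp
    next
      case (Some c)
      have "?w ! i = c" using Some i by (simp add: witness_def)
      then have "t!i = Some c" using wt i l Some \<open>t!i = Some b\<close> by (auto simp: cube_face_vset_def)
      then show ?thesis using Some by simp
    qed
  qed
  then show "refines s t" using l by (simp add: refines_def list_all2_conv_all_nth)
qed

lemma face_inj: "inj cube_face_vset"
proof (rule injI)
  fix s t assume "cube_face_vset s = cube_face_vset t"
  then have "refines s t" "refines t s" using face_subset_iff by auto
  then have "length s = length t" "\<forall>i<length s. t!i = None \<or> t!i = s!i" "\<forall>i<length s. s!i = None \<or> s!i = t!i"
    by (auto simp: refines_def list_all2_conv_all_nth)
  then show "s = t" by (metis nth_equalityI)
qed

lemma face_Cons: "cube_face_vset (x # s) = (\<lambda>(b,r). b # r) ` ({b. x = None \<or> x = Some b} \<times> cube_face_vset s)"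
proof (intro set_eqI iffI)
  fix v assume "v \<in> cube_face_vset (x # s)"
  then show "v \<in> (\<lambda>(b,r). b # r) ` ({b. x = None \<or> x = Some b} \<times> cube_face_vset s)"
    by (cases v) (auto simp: cube_face_vset_def All_less_Suc2)
next
  fix v assume "v \<in> (\<lambda>(b,r). b # r) ` ({b. x = None \<or> x = Some b} \<times> cube_face_vset s)"
  then show "v \<in> cube_face_vset (x # s)"
    by (auto simp: cube_face_vset_def All_less_Suc2)
qed

lemma face_card: "card (cube_face_vset s) = 2 ^ nfree s"
proof (induction s)
  case Nil
  have "cube_face_vset [] = {[]}" by (auto simp: cube_face_vset_def)
  then show ?case by simp
next
  case (Cons x s)
  have inj: "inj_on (\<lambda>(b,r). b # r) ({b. x = None \<or> x = Some b} \<times> cube_face_vset s)"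
    by (auto simp: inj_on_def)
  have c: "card {b. x = None \<or> x = Some b} = (if x = None then 2 else 1)"
  proof (cases x)
    case None
    then have "{b. x = None \<or> x = Some b} = UNIV" by auto
    then show ?thesis using None by (simp add: card_UNIV_bool)
  next
    case (Some c)
    then have "{b. x = None \<or> x = Some b} = {c}" by auto
    then show ?thesis using Some by simp
  qed
  show ?case unfolding face_Cons card_image[OF inj] card_cartesian_product c Cons by simp
qed

lemma rank_face: "cube_rank (cube_face_vset s) = int (nfree s)"
proof -
  have "(THE k. card (cube_face_vset s) = 2 ^ k) = nfree s"
    unfolding face_card by (rule the_equality) (auto simp: power_inject_exp)
  then show ?thesis using face_nonempty by (simp add: cube_rank_def)
qed

lemma rank_empty: "cube_rank {} = -1" by (simp add: cube_rank_def)

lemma mobius_eulerian: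
  fixes rk :: "'a set \<Rightarrow> int"
  assumes fin: "finite P" and finel: "\<forall>q\<in>P. finite q"
    and mono: "\<And>p q. p\<in>P \<Longrightarrow> q\<in>P \<Longrightarrow> p \<subseteq> q \<Longrightarrow> rk p \<le> rk q"
    and E: "\<And>p q. p\<in>P \<Longrightarrow> q\<in>P \<Longrightarrow> p \<subset> q \<Longrightarrow>
               (\<Sum>s\<in>{s\<in>P. p \<subseteq> s \<and> s \<subseteq> q}. (-1::int) ^ nat (rk s - rk p)) = 0"
  shows "\<forall>p q. card q = n \<longrightarrow> p\<in>P \<longrightarrow> q\<in>P \<longrightarrow> p \<subseteq> q \<longrightarrow> mobius P p q = (-1) ^ nat (rk q - rk p)"
proof (induction n rule: less_induct)
  case (less n)
  show ?case
  proof (intro allI impI)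
    fix p q assume cq: "card q = n" and pP: "p \<in> P" and qP: "q \<in> P" and pq: "p \<subseteq> q"
    show "mobius P p q = (-1) ^ nat (rk q - rk p)"
    proof (cases "p = q")
      case True then show ?thesis by (subst mobius.simps) simp
    next
      case False
      then have pq': "p \<subset> q" using pq by auto
      have fq: "finite q" using finel qP by auto
      have IH: "mobius P p s = (-1) ^ nat (rk s - rk p)" if s: "s \<in> {s\<in>P. p \<subseteq> s \<and> s \<subset> q}" for s
      proof -
        have "card s < n" using psubset_card_mono[OF fq] s cq by blast
        then show ?thesis using less[of "card s"] s pP by blast
      qed
      have "mobius P p q = - (\<Sum>s\<in>{s\<in>P. p \<subseteq> s \<and> s \<subset> q}. mobius P p s)"
        using pq' fq by (subst mobius.simps) simp
      also have "\<dots> = - (\<Sum>s\<in>{s\<in>P. p \<subseteq> s \<and> s \<subset> q}. (-1) ^ nat (rk s - rk p))"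
        using IH by simp
      also have "\<dots> = (-1) ^ nat (rk q - rk p)"
      proof -
        have "{s\<in>P. p \<subseteq> s \<and> s \<subseteq> q} = insert q {s\<in>P. p \<subseteq> s \<and> s \<subset> q}"
          using qP pq by auto
        then have "0 = (-1::int) ^ nat (rk q - rk p) + (\<Sum>s\<in>{s\<in>P. p \<subseteq> s \<and> s \<subset> q}. (-1) ^ nat (rk s - rk p))"
          using E[OF pP qP pq'] fin by (simp add: sum.insert)
        then show ?thesis by linarith
      qed
      finally show ?thesis .
    qed
  qed
qed



lemma prod_map_nfree: "prod_list (map (\<lambda>x. if x = None then c else 1) t) = c ^ nfree t"
  by (induction t) auto

lemma map2_fst_rep: "length t = d \<Longrightarrow> map2 (\<lambda>x y. g x) t (replicate d ()) = map g t"
  by (induction t arbitrary: d) (auto simp: Suc_length_conv)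

lemma sum_lists_len:
  fixes g :: "'a::finite \<Rightarrow> 'c::comm_semiring_1"
  shows "(\<Sum>t\<in>{t. length t = d}. prod_list (map g t)) = (\<Sum>x\<in>UNIV. g x) ^ d"
proof -
  have e: "{t::'a list. length t = d} = {t. list_all2 (\<lambda>_ _. True) t (replicate d ())}"
    by (auto simp: list_all2_conv_all_nth)
  have "(\<Sum>t\<in>{t. length t = d}. prod_list (map g t))
      = (\<Sum>t\<in>{t. list_all2 (\<lambda>_ _. True) t (replicate d ())}. prod_list (map2 (\<lambda>x y. g x) t (replicate d ())))"
    unfolding e by (rule sum.cong) (auto simp: map2_fst_rep list_all2_lengthD)
  also have "\<dots> = (\<Sum>x\<in>UNIV. g x) ^ d"
    by (subst sum_list_all2) (simp add: prod_list_replicate)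
  finally show ?thesis .
qed

lemma finite_all2: "finite {s::bool option list. list_all2 R s t}"
proof -
  have "{s::bool option list. list_all2 R s t} \<subseteq> {s. set s \<subseteq> UNIV \<and> length s = length t}"
    by (auto dest: list_all2_lengthD)
  moreover have "finite {s::bool option list. set s \<subseteq> UNIV \<and> length s = length t}"
    by (rule finite_lists_length_eq) simp
  ultimately show ?thesis by (rule finite_subset)
qed

lemma UNIV_bool_option: "(UNIV::bool option set) = {None, Some True, Some False}"
  using UNIV_option_conv UNIV_bool by auto

lemma sumL1: "(\<Sum>x\<in>{x. y = None \<or> y = x}. (if x = None then -1 else 1::int)) = 1" for y :: "bool option"
proof (cases y)
  case None
  have e: "{x. y = None \<or> y = x} = {None, Some True, Some False}" using None UNIV_bool_option by auto
  show ?thesis by (subst e) simp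
next
  case (Some b)
  then have "{x. y = None \<or> y = x} = {Some b}" by auto
  then show ?thesis using Some by simp
qed

lemma sumL2: "(\<Sum>x\<in>{x. y = None \<or> y = x}. (if y = None \<and> x \<noteq> None then Y else 1)) = (if y = None then 1 + Y + Y else (1::'c::comm_ring_1))"
  for y :: "bool option"
proof (cases y)
  case None
  have e: "{x. y = None \<or> y = x} = {None, Some True, Some False}" using None UNIV_bool_option by auto
  show ?thesis by (subst e) (simp add: None add.assoc del: not_None_eq)
next
  case (Some b)
  then have "{x. y = None \<or> y = x} = {Some b}" by auto
  then show ?thesis using Some by simp
qed

lemma sum_down: "(\<Sum>u\<in>{u. refines u t}. (-1::int) ^ nfree u) = 1"
proof -
  have "(\<Sum>u\<in>{u. refines u t}. (-1::int) ^ nfree u)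
     = (\<Sum>u\<in>{u. list_all2 (\<lambda>x y. y = None \<or> y = x) u t}. prod_list (map2 (\<lambda>x y. if x = None then -1 else 1) u t))"
    unfolding refines_def by (rule sum.cong) (simp_all add: prod_nfree)
  also have "\<dots> = prod_list (map (\<lambda>y::bool option. \<Sum>x\<in>{x. y = None \<or> y = x}. (if x = None then -1 else 1::int)) t)"
    by (rule sum_list_all2)
  also have "(\<lambda>y::bool option. \<Sum>x\<in>{x. y = None \<or> y = x}. (if x = None then -1 else 1::int)) = (\<lambda>y. 1)"
    by (intro ext) (rule sumL1)
  also have "prod_list (map (\<lambda>y::bool option. 1::int) t) = 1" by (induction t) simp_all
  finally show ?thesis .
qed

lemma sum_interval:
  assumes at: "refines a t" and ne: "a \<noteq> t"
  shows "(\<Sum>u\<in>{u. refines a u \<and> refines u t}. (-1::int) ^ nfree u) = 0"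
proof -
  define R' where "R' = (\<lambda>x (y::bool option, z::bool option). (x = None \<or> x = y) \<and> (z = None \<or> z = x))"
  have l: "length a = length t" using at by (simp add: refines_def list_all2_lengthD)
  have e: "{u. refines a u \<and> refines u t} = {u. list_all2 R' u (zip a t)}"
  proof (intro set_eqI)
    fix u
    have 1: "list_all2 R' u (zip a t) \<longleftrightarrow> length u = length a \<and>
       (\<forall>i<length a. (u!i = None \<or> u!i = a!i) \<and> (t!i = None \<or> t!i = u!i))"
      using l by (cases "length u = length a") (simp_all add: list_all2_conv_all_nth R'_def nth_zip)
    have 2: "refines a u \<and> refines u t \<longleftrightarrow> length u = length a \<and>
       (\<forall>i<length a. (u!i = None \<or> u!i = a!i) \<and> (t!i = None \<or> t!i = u!i))"
      using l by (cases "length u = length a") (auto simp: refines_def list_all2_conv_all_nth)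
    show "u \<in> {u. refines a u \<and> refines u t} \<longleftrightarrow> u \<in> {u. list_all2 R' u (zip a t)}"
      using 1 2 by simp
  qed
  have "(\<Sum>u\<in>{u. refines a u \<and> refines u t}. (-1::int) ^ nfree u)
     = (\<Sum>u\<in>{u. list_all2 R' u (zip a t)}. prod_list (map2 (\<lambda>x y. if x = None then -1 else 1) u (zip a t)))"
    unfolding e by (rule sum.cong) (simp_all add: prod_nfree)
  also have "\<dots> = prod_list (map (\<lambda>y. \<Sum>x\<in>{x. R' x y}. (if x = None then -1 else 1::int)) (zip a t))"
    by (rule sum_list_all2)
  also have "\<dots> = 0"
  proof -
    let ?F = "\<lambda>y. \<Sum>x\<in>{x. R' x y}. (if x = None then -1 else 1::int)"
    have "\<exists>i<length a. a ! i \<noteq> t ! i"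
    proof (rule ccontr)
      assume "\<not> (\<exists>i<length a. a ! i \<noteq> t ! i)"
      then have "a = t" using l by (simp add: list_eq_iff_nth_eq)
      then show False using ne by simp
    qed
    then obtain i where i: "i < length a" and d: "a ! i \<noteq> t ! i" by blast
    have "t ! i = None \<or> t ! i = a ! i" using at i by (simp add: refines_def list_all2_conv_all_nth)
    then have tn: "t ! i = None" using d by simp
    then obtain b where ab: "a ! i = Some b" using d by (cases "a ! i") auto
    have "zip a t ! i = (a ! i, t ! i)" using i l by simp
    moreover have "zip a t ! i \<in> set (zip a t)" by (rule nth_mem) (use l i in simp)
    ultimately have mem: "(Some b, None) \<in> set (zip a t)" using ab tn by simp
    have "{x. R' x (Some b, None)} = {None, Some b}" by (auto simp: R'_def)
    then have h0: "?F (Some b, None) = 0" by simp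
    have "0 \<in> ?F ` set (zip a t)" by (rule image_eqI[where x = "(Some b, None)"]) (use h0 mem in simp_all)
    then have "0 \<in> set (map ?F (zip a t))" by simp
    then show ?thesis by (simp add: prod_list_zero_iff)
  qed
  finally show ?thesis .
qed

lemma neg_pow: "n \<le> m \<Longrightarrow> (-1::int) ^ nat (int m - int n) = (-1) ^ n * (-1) ^ m"
proof -
  assume "n \<le> m"
  then obtain k where m: "m = n + k" using le_Suc_ex by blast
  have "(-1::int) ^ n * (-1) ^ n = 1"
    by (metis mult_minus_left mult_1_left power_minus1_even power_add mult_2)
  then have "(-1::int) ^ k = (-1) ^ n * ((-1) ^ n * (-1) ^ k)" by (simp add: mult.assoc[symmetric])
  then show ?thesis unfolding m by (simp add: power_add)
qed

lemma P_eq: "cube_face_poset d = insert {} (cube_face_vset ` {s. length s = d})"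
  by (auto simp: cube_face_poset_def)

lemma S_finite: "finite {s::bool option list. length s = d}"
proof -
  have "finite {s::bool option list. set s \<subseteq> UNIV \<and> length s = d}"
    by (rule finite_lists_length_eq) simp
  then show ?thesis by simp
qed

lemma P_finite: "finite (cube_face_poset d)"
  unfolding P_eq using S_finite by simp

lemma P_finel: "\<forall>q\<in>cube_face_poset d. finite q"
  unfolding P_eq using face_finite by auto

lemma P_mono:
  assumes "p \<in> cube_face_poset d" "q \<in> cube_face_poset d" "p \<subseteq> q"
  shows "cube_rank p \<le> cube_rank q"
proof (cases "p = {}")
  case True
  show ?thesis
  proof (cases "q = {}")
    case True then show ?thesis using \<open>p = {}\<close> by simp
  next
    case False
    then obtain t where "q = cube_face_vset t" using assms(2) unfolding P_eq by auto
    then show ?thesis using True by (simp add: rank_face rank_empty)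
  qed
next
  case False
  then obtain a where pa: "p = cube_face_vset a" using assms(1) unfolding P_eq by auto
  then have "q \<noteq> {}" using assms(3) face_nonempty by blast
  then obtain t where qt: "q = cube_face_vset t" using assms(2) unfolding P_eq by auto
  have "refines a t" using assms(3) pa qt face_subset_iff by blast
  then show ?thesis using pa qt by (simp add: rank_face refines_nfree)
qed

lemma P_E:
  assumes pP: "p \<in> cube_face_poset d" and qP: "q \<in> cube_face_poset d" and pq: "p \<subset> q"
  shows "(\<Sum>s\<in>{s\<in>cube_face_poset d. p \<subseteq> s \<and> s \<subseteq> q}. (-1::int) ^ nat (cube_rank s - cube_rank p)) = 0"
proof -
  have "q \<noteq> {}" using pq by blast
  then obtain t where qt: "q = cube_face_vset t" and lt: "length t = d" using qP unfolding P_eq by auto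
  have injf: "inj_on cube_face_vset A" for A by (metis face_inj inj_on_subset subset_UNIV)
  show ?thesis
  proof (cases "p = {}")
    case True
    have e: "{s\<in>cube_face_poset d. p \<subseteq> s \<and> s \<subseteq> q} = insert {} (cube_face_vset ` {u. refines u t})"
      using True qt lt face_subset_iff
      by (auto simp: P_eq refines_def dest: list_all2_lengthD)
    have ne: "{} \<notin> cube_face_vset ` {u. refines u t}" using face_nonempty by auto
    have fin: "finite (cube_face_vset ` {u. refines u t})"
      unfolding refines_def by (rule finite_imageI) (rule finite_all2)
    have "(\<Sum>s\<in>{s\<in>cube_face_poset d. p \<subseteq> s \<and> s \<subseteq> q}. (-1::int) ^ nat (cube_rank s - cube_rank p))
        = 1 + (\<Sum>s\<in>cube_face_vset ` {u. refines u t}. (-1::int) ^ nat (cube_rank s + 1))"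
      unfolding e using ne fin True by (simp add: rank_empty)
    also have "\<dots> = 1 + (\<Sum>u\<in>{u. refines u t}. (-1::int) ^ nat (int (nfree u) + 1))"
      by (subst sum.reindex[OF injf]) (simp add: rank_face)
    also have "\<dots> = 1 - (\<Sum>u\<in>{u. refines u t}. (-1::int) ^ nfree u)"
      by (simp add: nat_add_distrib sum_negf)
    also have "\<dots> = 0" by (simp add: sum_down)
    finally show ?thesis .
  next
    case False
    then obtain a where pa: "p = cube_face_vset a" using pP unfolding P_eq by auto
    have at: "refines a t" using pq pa qt face_subset_iff by blast
    have ne: "a \<noteq> t" using pq pa qt by blast
    have la: "length a = d" using at lt by (simp add: refines_def list_all2_lengthD)
    have e: "{s\<in>cube_face_poset d. p \<subseteq> s \<and> s \<subseteq> q} = cube_face_vset ` {u. refines a u \<and> refines u t}"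
    proof (intro set_eqI iffI)
      fix s assume s: "s \<in> {s\<in>cube_face_poset d. p \<subseteq> s \<and> s \<subseteq> q}"
      then have "s \<noteq> {}" using pa face_nonempty by blast
      then obtain u where "s = cube_face_vset u" using s unfolding P_eq by auto
      then show "s \<in> cube_face_vset ` {u. refines a u \<and> refines u t}"
        using s pa qt face_subset_iff by auto
    next
      fix s assume "s \<in> cube_face_vset ` {u. refines a u \<and> refines u t}"
      then obtain u where u: "s = cube_face_vset u" "refines a u" "refines u t" by auto
      then have "length u = d" using lt by (simp add: refines_def list_all2_lengthD)
      then show "s \<in> {s\<in>cube_face_poset d. p \<subseteq> s \<and> s \<subseteq> q}"
        using u pa qt face_subset_iff unfolding P_eq by auto
    qed
    have "(\<Sum>s\<in>{s\<in>cube_face_poset d. p \<subseteq> s \<and> s \<subseteq> q}. (-1::int) ^ nat (cube_rank s - cube_rank p))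
        = (\<Sum>u\<in>{u. refines a u \<and> refines u t}. (-1::int) ^ nat (int (nfree u) - int (nfree a)))"
      unfolding e by (subst sum.reindex[OF injf]) (simp add: rank_face pa)
    also have "\<dots> = (\<Sum>u\<in>{u. refines a u \<and> refines u t}. (-1) ^ nfree a * (-1::int) ^ nfree u)"
      by (rule sum.cong) (auto simp: neg_pow refines_nfree)
    also have "\<dots> = (-1) ^ nfree a * (\<Sum>u\<in>{u. refines a u \<and> refines u t}. (-1::int) ^ nfree u)"
      by (simp add: sum_distrib_left)
    also have "\<dots> = 0" using sum_interval[OF at ne] by simp
    finally show ?thesis .
  qed
qed


theorem mainTheorem9:
  fixes d :: nat
  shows "mobius_poly (cube_face_poset d) cube_rank =
           [:3, -2:] ^ d - [:0, 1:] * [:2, -1:] ^ d + 1"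
proof -
  define P where "P = cube_face_poset d"
  define S where "S = {s::bool option list. length s = d}"
  define Y where "Y = [:0, -1::int:]"
  let ?f = cube_face_vset
  let ?rk = cube_rank
  have injf: "inj_on cube_face_vset A" for A by (metis face_inj inj_on_subset subset_UNIV)
  have mu: "mobius P p q = (-1) ^ nat (?rk q - ?rk p)" if "p \<in> P" "q \<in> P" "p \<subseteq> q" for p q
  proof -
    have "\<forall>p q'. card q' = card q \<longrightarrow> p \<in> P \<longrightarrow> q' \<in> P \<longrightarrow> p \<subseteq> q' \<longrightarrow> mobius P p q' = (-1) ^ nat (?rk q' - ?rk p)"
      unfolding P_def
    proof (rule mobius_eulerian)
      show "finite (cube_face_poset d)" by (rule P_finite)
      show "\<forall>q\<in>cube_face_poset d. finite q" by (rule P_finel)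
      show "cube_rank p \<le> cube_rank q" if "p \<in> cube_face_poset d" "q \<in> cube_face_poset d" "p \<subseteq> q" for p q
        using P_mono that by blast
      show "(\<Sum>s\<in>{s\<in>cube_face_poset d. p \<subseteq> s \<and> s \<subseteq> q}. (-1::int) ^ nat (cube_rank s - cube_rank p)) = 0"
        if "p \<in> cube_face_poset d" "q \<in> cube_face_poset d" "p \<subset> q" for p q
        using P_E that by blast
    qed
    then show ?thesis using that by blast
  qed
  define A where "A = (\<lambda>t. ({}::bool list set, ?f t)) ` S"
  define B where "B = (\<lambda>(t,s). (?f s, ?f t)) ` (SIGMA t:S. {s. refines s t})"
  have finS: "finite S" unfolding S_def by (rule S_finite)
  have finSig: "finite (SIGMA t:S. {s. refines s t})"
    by (rule finite_SigmaI[OF finS]) (simp add: refines_def finite_all2)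
  have pairs: "{(p,q). p \<in> P \<and> q \<in> P \<and> p \<subseteq> q} = insert ({},{}) (A \<union> B)"
  proof (intro set_eqI iffI)
    fix x assume x: "x \<in> {(p,q). p \<in> P \<and> q \<in> P \<and> p \<subseteq> q}"
    then obtain p q where xpq: "x = (p,q)" "p \<in> P" "q \<in> P" "p \<subseteq> q" by auto
    show "x \<in> insert ({},{}) (A \<union> B)"
    proof (cases "p = {}")
      case True
      show ?thesis
      proof (cases "q = {}")
        case True then show ?thesis using xpq \<open>p = {}\<close> by simp
      next
        case False
        then obtain t where "q = ?f t" "t \<in> S" using xpq unfolding P_def P_eq S_def by auto
        then show ?thesis using xpq True unfolding A_def by auto
      qed
    next
      case False
      then obtain a where pa: "p = ?f a" using xpq unfolding P_def P_eq by auto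
      then have "q \<noteq> {}" using xpq face_nonempty by blast
      then obtain t where qt: "q = ?f t" "t \<in> S" using xpq unfolding P_def P_eq S_def by auto
      have "refines a t" using xpq pa qt face_subset_iff by blast
      then have ta: "(t, a) \<in> (SIGMA t:S. {s. refines s t})" using qt by auto
      have "x = (\<lambda>(t,s). (?f s, ?f t)) (t, a)" using xpq pa qt by simp
      then have "x \<in> B" unfolding B_def using ta by (rule image_eqI)
      then show ?thesis by simp
    qed
  next
    fix x assume x: "x \<in> insert ({},{}) (A \<union> B)"
    show "x \<in> {(p,q). p \<in> P \<and> q \<in> P \<and> p \<subseteq> q}"
    proof (cases "x \<in> B")
      case True
      then obtain t s where ts: "x = (?f s, ?f t)" "length t = d" "refines s t"
        unfolding B_def S_def by auto
      then have "length s = d" by (simp add: refines_def list_all2_lengthD)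
      moreover have "?f s \<subseteq> ?f t" using ts face_subset_iff by blast
      ultimately show ?thesis using ts unfolding P_def P_eq by auto
    next
      case False
      then show ?thesis using x unfolding A_def P_def P_eq S_def by auto
    qed
  qed
  have finA: "finite A" unfolding A_def using finS by simp
  have finB: "finite B" unfolding B_def using finSig by simp
  have disj: "A \<inter> B = {}" unfolding A_def B_def using face_nonempty by auto
  have notin: "({},{}) \<notin> A \<union> B" unfolding A_def B_def using face_nonempty by auto
  have "mobius_poly P ?rk = (\<Sum>(p,q)\<in>{(p,q). p \<in> P \<and> q \<in> P \<and> p \<subseteq> q}. Y ^ nat (?rk q - ?rk p))"
    unfolding mobius_poly_def Y_def by (rule sum.cong) (auto simp: mu monom_neg)
  also have "\<dots> = 1 + ((\<Sum>(p,q)\<in>A. Y ^ nat (?rk q - ?rk p)) + (\<Sum>(p,q)\<in>B. Y ^ nat (?rk q - ?rk p)))"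
    unfolding pairs using finA finB disj notin by (simp add: sum.union_disjoint)
  also have "(\<Sum>(p,q)\<in>A. Y ^ nat (?rk q - ?rk p)) = Y * (Y + 1 + 1) ^ d"
  proof -
    have inj: "inj_on (\<lambda>t. ({}, ?f t)) S" using face_inj by (auto simp: inj_on_def inj_def)
    have "(\<Sum>(p,q)\<in>A. Y ^ nat (?rk q - ?rk p)) = (\<Sum>t\<in>S. Y ^ nat (int (nfree t) + 1))"
      unfolding A_def by (subst sum.reindex[OF inj]) (simp add: rank_face rank_empty)
    also have "\<dots> = Y * (\<Sum>t\<in>S. prod_list (map (\<lambda>x. if x = None then Y else 1) t))"
      by (simp add: nat_add_distrib sum_distrib_left prod_map_nfree)
    also have "\<dots> = Y * (\<Sum>x\<in>(UNIV::bool option set). (if x = None then Y else 1)) ^ d"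
      unfolding S_def by (simp add: sum_lists_len)
    also have "\<dots> = Y * (Y + 1 + 1) ^ d" by (simp add: UNIV_bool_option ac_simps)
    finally show ?thesis .
  qed
  also have "(\<Sum>(p,q)\<in>B. Y ^ nat (?rk q - ?rk p)) = (1 + Y + Y + 1 + 1) ^ d"
  proof -
    have inj: "inj_on (\<lambda>(t,s). (?f s, ?f t)) (SIGMA t:S. {s. refines s t})"
      using face_inj by (auto simp: inj_on_def inj_def)
    define v :: "bool option \<Rightarrow> bool option \<Rightarrow> int poly" where "v = (\<lambda>x y. if y = None \<and> x \<noteq> None then Y else (1::int poly))"
    have "(\<Sum>(p,q)\<in>B. Y ^ nat (?rk q - ?rk p)) = (\<Sum>(t,s)\<in>(SIGMA t:S. {s. refines s t}). Y ^ nat (int (nfree t) - int (nfree s)))"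
      unfolding B_def by (subst sum.reindex[OF inj]) (simp add: rank_face case_prod_beta)
    also have "\<dots> = (\<Sum>t\<in>S. \<Sum>s\<in>{s. refines s t}. Y ^ nat (int (nfree t) - int (nfree s)))"
      by (rule sum.Sigma[symmetric, OF finS]) (simp add: refines_def finite_all2)
    also have "\<dots> = (\<Sum>t\<in>S. \<Sum>s\<in>{s. list_all2 (\<lambda>x y::bool option. y = None \<or> y = x) s t}. prod_list (map2 v s t))"
    proof (rule sum.cong[OF refl], rule sum.cong)
      fix t s assume "s \<in> {s. list_all2 (\<lambda>x y::bool option. y = None \<or> y = x) s t}"
      then have r: "refines s t" by (simp add: refines_def)
      then have le: "nfree s \<le> nfree t" by (rule refines_nfree)
      have n: "nat (int (nfree t) - int (nfree s)) = nfree t - nfree s" using le by simp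
      have p: "prod_list (map2 v s t) = Y ^ (nfree t - nfree s)"
        unfolding v_def using prod_diff[OF r, of Y] by (rule conjunct1)
      show "Y ^ nat (int (nfree t) - int (nfree s)) = prod_list (map2 v s t)"
        unfolding n p ..
    qed (simp add: refines_def)
    also have "\<dots> = (\<Sum>t\<in>S. prod_list (map (\<lambda>y::bool option. \<Sum>x\<in>{x. y = None \<or> y = x}. v x y) t))"
      by (simp add: sum_list_all2)
    also have "(\<lambda>y::bool option. \<Sum>x\<in>{x. y = None \<or> y = x}. v x y) = (\<lambda>y. if y = None then 1 + Y + Y else 1)"
      unfolding v_def by (rule ext) (rule sumL2)
    also have "(\<Sum>t\<in>S. prod_list (map (\<lambda>y. if y = None then 1 + Y + Y else 1) t)) = (1 + Y + Y + 1 + 1) ^ d"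
      unfolding S_def by (simp add: sum_lists_len UNIV_bool_option add.assoc)
    finally show ?thesis .
  qed
  also have "1 + (Y * (Y + 1 + 1) ^ d + (1 + Y + Y + 1 + 1) ^ d) = [:3, -2:] ^ d - [:0, 1:] * [:2, -1:] ^ d + 1"
  proof -
    have "Y = - [:0,1:]" unfolding Y_def by simp
    moreover have "Y + 1 + 1 = [:2,-1:]" unfolding Y_def by (simp add: numeral_poly one_pCons)
    moreover have "1 + Y + Y + 1 + 1 = [:3,-2:]" unfolding Y_def by (simp add: numeral_poly one_pCons)
    ultimately show ?thesis by simp
  qed
  finally show ?thesis unfolding P_def .
qed

end
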